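(* Let $b_1,\dots,b_k$ be positive integers and let $[c_1,\dots,c_k]$ be a permutation (rearrangement) of the list $[b_1,\dots,b_k]$. Then $\operatorname{op}_{[b_1,\dots,b_k]}(123)=\operatorname{op}_{[c_1,\dots,c_k]}(123)$.
   Context: An ordered set partition of $[N]$ into $k$ blocks is a sequence $B_1/B_2/\cdots/B_k$ of nonempty, pairwise disjoint subsets of $[N]$ whose union is $[N]$; the order of the blocks matters, but not the order of elements within a block. For a permutation $\rho=\rho_1\cdots\rho_m\in\mathcal{S}_m$, an ordered partition $B_1/\cdots/B_k$ contains $\rho$ if there are block indices $i_1<i_2<\cdots<i_m$ and elements $b_j\in B_{i_j}$ such that $b_1\cdots b_m$ is order-isomorphic to $\rho$ (i.e. $b_a<b_c$ iff $\rho_a<\rho_c$); otherwise it avoids $\rho$. For positive integers $b_1,\dots,b_k$, $\operatorname{op}_{[b_1,\dots,b_k]}(\rho)$ denotes the number of ordered partitions $B_1/\cdots/B_k$ of $[b_1+\cdots+b_k]$ with $|B_i|=b_i$ for all $i$ that avoid $\rho$. *)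

theory Defs
  imports Main "HOL-Combinatorics.List_Permutation"
begin

definition is_ordered_partition :: "nat \<Rightarrow> nat set list \<Rightarrow> bool" where
  "is_ordered_partition N Bs \<longleftrightarrow>
     (\<forall>i < length Bs. Bs ! i \<noteq> {}) \<and>
     (\<forall>i < length Bs. \<forall>j < length Bs. i \<noteq> j \<longrightarrow> Bs ! i \<inter> Bs ! j = {}) \<and>
     \<Union> (set Bs) = {1..N}"

definition order_iso :: "nat list \<Rightarrow> nat list \<Rightarrow> bool" where
  "order_iso xs ys \<longleftrightarrow> length xs = length ys \<and>
     (\<forall>a < length xs. \<forall>c < length xs. (xs ! a < xs ! c \<longleftrightarrow> ys ! a < ys ! c))"

definition op_contains :: "nat set list \<Rightarrow> nat list \<Rightarrow> bool" where
  "op_contains Bs rho \<longleftrightarrow>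
     (\<exists>is bs. length is = length rho \<and> length bs = length rho \<and>
        sorted_wrt (<) is \<and> (\<forall>j < length is. is ! j < length Bs) \<and>
        (\<forall>j < length bs. bs ! j \<in> Bs ! (is ! j)) \<and>
        order_iso bs rho)"

definition op_count :: "nat list \<Rightarrow> nat list \<Rightarrow> nat" where
  "op_count bl rho = card {Bs. is_ordered_partition (sum_list bl) Bs \<and>
       map card Bs = bl \<and> \<not> op_contains Bs rho}"

end

theory Submission
  imports Defs
begin

definition rv :: "nat set \<Rightarrow> nat \<Rightarrow> nat" where
  "rv K u = (let xs = sorted_list_of_set K in
     xs ! (length xs - 1 - (THE i. i < length xs \<and> xs ! i = u)))"

lemma idx_prop:
  assumes "finite K" "u \<in> K"
  defines "xs \<equiv> sorted_list_of_set K"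
  shows "(THE i. i < length xs \<and> xs ! i = u) < length xs \<and> xs ! (THE i. i < length xs \<and> xs ! i = u) = u"
proof -
  have d: "distinct xs" and s: "set xs = K" using assms by auto
  obtain i where i: "i < length xs" "xs ! i = u" using assms s by (metis in_set_conv_nth)
  have "(THE i. i < length xs \<and> xs ! i = u) = i"
    using i d by (auto intro!: the_equality simp: nth_eq_iff_index_eq)
  thus ?thesis using i by simp
qed

lemma idx_nth:
  assumes "finite K" "j < length (sorted_list_of_set K)"
  shows "(THE i. i < length (sorted_list_of_set K) \<and> sorted_list_of_set K ! i = sorted_list_of_set K ! j) = j"
  using assms by (auto intro!: the_equality simp: nth_eq_iff_index_eq)

lemma rv_in: assumes f: "finite K" and u: "u \<in> K" shows "rv K u \<in> K"
proof -
  define xs where "xs = sorted_list_of_set K"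
  define i where "i = (THE i. i < length xs \<and> xs ! i = u)"
  have i: "i < length xs" "xs ! i = u" using idx_prop[OF f u] unfolding i_def xs_def by auto
  have "rv K u = xs ! (length xs - 1 - i)" unfolding rv_def xs_def i_def Let_def by simp
  moreover have "length xs - 1 - i < length xs" using i by linarith
  ultimately show ?thesis using f xs_def by (metis nth_mem set_sorted_list_of_set)
qed

lemma rv_rv: "finite K \<Longrightarrow> u \<in> K \<Longrightarrow> rv K (rv K u) = u"
proof -
  assume f: "finite K" and u: "u \<in> K"
  define xs where "xs = sorted_list_of_set K"
  define i where "i = (THE i. i < length xs \<and> xs ! i = u)"
  have i: "i < length xs" "xs ! i = u" using idx_prop[OF f u] unfolding i_def xs_def by auto
  have "rv K u = xs ! (length xs - 1 - i)" unfolding rv_def xs_def i_def Let_def by simp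
  moreover have "length xs - 1 - i < length xs" using i by linarith
  ultimately have "rv K (rv K u) = xs ! (length xs - 1 - (length xs - 1 - i))"
    unfolding rv_def Let_def xs_def[symmetric] using idx_nth[OF f, of "length xs - 1 - i"] xs_def
    by metis
  also have "\<dots> = u" using i by (simp add: Suc_leI)
  finally show ?thesis .
qed

lemma rv_rev: assumes f: "finite K" and u: "u \<in> K" and v: "v \<in> K" and uv: "u < v"
  shows "rv K v < rv K u"
proof -
  define xs where "xs = sorted_list_of_set K"
  define i where "i = (THE i. i < length xs \<and> xs ! i = u)"
  define j where "j = (THE i. i < length xs \<and> xs ! i = v)"
  have i: "i < length xs" "xs ! i = u" using idx_prop[OF f u] unfolding i_def xs_def by auto
  have j: "j < length xs" "xs ! j = v" using idx_prop[OF f v] unfolding j_def xs_def by auto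
  have s: "sorted_wrt (<) xs" unfolding xs_def by simp
  have "i < j"
  proof (rule ccontr)
    assume "\<not> i < j"
    hence "j < i \<or> j = i" by auto
    thus False using sorted_wrt_nth_less[OF s, of j i] i j uv by auto
  qed
  hence "xs ! (length xs - 1 - j) < xs ! (length xs - 1 - i)"
    using sorted_wrt_nth_less[OF s] i j by simp
  thus ?thesis unfolding rv_def xs_def i_def j_def Let_def by simp
qed


definition cls :: "nat set \<Rightarrow> nat set \<Rightarrow> nat set \<Rightarrow> nat \<Rightarrow> nat set" where
  "cls E T U u = {w\<in>U. (\<exists>e\<in>E. e < w) = (\<exists>e\<in>E. e < u) \<and> (\<exists>e\<in>T. w < e) = (\<exists>e\<in>T. u < e)}"

definition sig :: "nat set \<Rightarrow> nat set \<Rightarrow> nat set \<Rightarrow> nat \<Rightarrow> nat" where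
  "sig E T U u = rv (cls E T U u) u"

lemma cls_fin: "finite U \<Longrightarrow> finite (cls E T U u)"
  unfolding cls_def by auto

lemma cls_self: "u \<in> U \<Longrightarrow> u \<in> cls E T U u"
  unfolding cls_def by auto

lemma cls_eq: "v \<in> cls E T U u \<Longrightarrow> cls E T U v = cls E T U u"
  unfolding cls_def by auto

lemma sig_cls: "finite U \<Longrightarrow> u \<in> U \<Longrightarrow> sig E T U u \<in> cls E T U u"
  unfolding sig_def by (simp add: rv_in cls_fin cls_self)

lemma sig_U: "finite U \<Longrightarrow> u \<in> U \<Longrightarrow> sig E T U u \<in> U"
  using sig_cls unfolding cls_def by blast

lemma sig_A: "finite U \<Longrightarrow> u \<in> U \<Longrightarrow> (\<exists>e\<in>E. e < sig E T U u) = (\<exists>e\<in>E. e < u)"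
  using sig_cls[of U u E T] unfolding cls_def by blast

lemma sig_C: "finite U \<Longrightarrow> u \<in> U \<Longrightarrow> (\<exists>e\<in>T. sig E T U u < e) = (\<exists>e\<in>T. u < e)"
  using sig_cls[of U u E T] unfolding cls_def by blast

lemma sig_sig: "finite U \<Longrightarrow> u \<in> U \<Longrightarrow> sig E T U (sig E T U u) = u"
  unfolding sig_def
  using cls_eq[OF sig_cls[unfolded sig_def]] rv_rv cls_fin cls_self
  by metis

lemma sig_rev: assumes "finite U" "u \<in> U" "v \<in> U" "u < v"
  "(\<exists>e\<in>E. e < v) = (\<exists>e\<in>E. e < u)" "(\<exists>e\<in>T. v < e) = (\<exists>e\<in>T. u < e)"
  shows "sig E T U v < sig E T U u"
proof -
  have "v \<in> cls E T U u" using assms unfolding cls_def by auto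
  hence "cls E T U v = cls E T U u" by (rule cls_eq)
  thus ?thesis unfolding sig_def using rv_rev[OF cls_fin[OF assms(1)] cls_self[OF assms(2)] \<open>v \<in> cls E T U u\<close> assms(4)]
    by simp
qed

lemma sig_inj: "finite U \<Longrightarrow> inj_on (sig E T U) U"
  by (metis inj_onI sig_sig)

lemma sig_image: "finite U \<Longrightarrow> sig E T U ` U = U"
  using sig_U sig_sig by (metis image_subsetI subset_antisym imageI subsetI)

lemma sig_image2: "finite U \<Longrightarrow> X \<subseteq> U \<Longrightarrow> sig E T U ` (sig E T U ` X) = X"
  by (auto simp: image_image sig_sig subset_iff)


definition c3 :: "nat set list \<Rightarrow> bool" where
  "c3 Bs = (\<exists>i j k a b c. i < j \<and> j < k \<and> k < length Bs \<and> a \<in> Bs!i \<and> b \<in> Bs!j \<and> c \<in> Bs!k \<and> a < b \<and> b < c)"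

lemma all3: "(\<forall>a<3::nat. P a) = (P 0 \<and> P 1 \<and> P 2)"
  by (auto simp: numeral_3_eq_3 numeral_2_eq_2 less_Suc_eq)

lemma c3_iff: "op_contains Bs [1,2,3] = c3 Bs"
proof
  assume "op_contains Bs [1,2,3]"
  then obtain iss bs where h0: "length iss = length [1,2,3::nat]" "length bs = length [1,2,3::nat]" "sorted_wrt (<) iss"
    "\<forall>j<length iss. iss ! j < length Bs" "\<forall>j<length bs. bs ! j \<in> Bs ! (iss ! j)"
    "order_iso bs [1,2,3]" unfolding op_contains_def by blast
  have h: "length iss = 3" "length bs = 3" "sorted_wrt (<) iss"
    "\<forall>j<length iss. iss ! j < length Bs" "\<forall>j<length bs. bs ! j \<in> Bs ! (iss ! j)"
    "order_iso bs [1,2,3]" using h0 by auto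
  obtain i j k where iss: "iss = [i,j,k]" using h(1)
    by (metis (no_types) length_0_conv length_Suc_conv numeral_3_eq_3)
  obtain a b c where bs: "bs = [a,b,c]" using h(2)
    by (metis (no_types) length_0_conv length_Suc_conv numeral_3_eq_3)
  have H: "\<forall>x<3. \<forall>y<3. ([a,b,c]!x < [a,b,c]!y) = ([1,2,3::nat]!x < [1,2,3::nat]!y)"
    using h(6) unfolding bs order_iso_def by simp
  have lt: "(0::nat)<3" "(1::nat)<3" "(2::nat)<3" by auto
  have "([a,b,c]!0 < [a,b,c]!1) = ([1,2,3::nat]!0 < [1,2,3::nat]!1)"
       "([a,b,c]!1 < [a,b,c]!2) = ([1,2,3::nat]!1 < [1,2,3::nat]!2)"
    using H lt by blast+
  hence o: "a < b" "b < c" by simp_all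
  show "c3 Bs" unfolding c3_def
    apply (rule exI[of _ i], rule exI[of _ j], rule exI[of _ k])
    apply (rule exI[of _ a], rule exI[of _ b], rule exI[of _ c])
    using h(3-5) o unfolding iss bs all3 by auto
next
  assume "c3 Bs"
  then obtain i j k a b c where h: "i < j" "j < k" "k < length Bs" "a \<in> Bs!i" "b \<in> Bs!j" "c \<in> Bs!k"
    "a < b" "b < c" unfolding c3_def by blast
  show "op_contains Bs [1,2,3]" unfolding op_contains_def
    apply (rule exI[of _ "[i,j,k]"], rule exI[of _ "[a,b,c]"])
    using h by (auto simp: order_iso_def less_Suc_eq)
qed

fun pdisj :: "nat set list \<Rightarrow> bool" where
  "pdisj [] = True"
| "pdisj (x # xs) = ((\<forall>b\<in>set xs. x \<inter> b = {}) \<and> pdisj xs)"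

lemma pdisj_iff: "(\<forall>i<length Bs. \<forall>j<length Bs. i \<noteq> j \<longrightarrow> Bs!i \<inter> Bs!j = {}) = pdisj Bs"
proof (induction Bs)
  case Nil
  then show ?case by simp
next
  case (Cons x xs)
  have "(\<forall>i<length (x#xs). \<forall>j<length (x#xs). i \<noteq> j \<longrightarrow> (x#xs)!i \<inter> (x#xs)!j = {})
     = ((\<forall>j<length xs. x \<inter> xs!j = {}) \<and> (\<forall>i<length xs. \<forall>j<length xs. i \<noteq> j \<longrightarrow> xs!i \<inter> xs!j = {}))"
    by (auto simp: All_less_Suc2 Int_commute) blast+
  then show ?case using Cons.IH by (simp add: all_set_conv_all_nth)
qed

lemma pdisj_app: "pdisj (xs @ ys) = (pdisj xs \<and> pdisj ys \<and> (\<forall>a\<in>set xs. \<forall>b\<in>set ys. a \<inter> b = {}))"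
  by (induction xs) auto

lemma pdisj_mid: "pdisj (pre @ A # B # suf) = (pdisj pre \<and> (A \<inter> B = {} \<and> (\<forall>b\<in>set suf. A \<inter> b = {} \<and> B \<inter> b = {}) \<and> pdisj suf) \<and>
   (\<forall>a\<in>set pre. a \<inter> A = {} \<and> a \<inter> B = {} \<and> (\<forall>b\<in>set suf. a \<inter> b = {})))"
proof -
  have "pdisj (pre @ A # B # suf) = (pdisj pre \<and> pdisj (A # B # suf) \<and> (\<forall>a\<in>set pre. \<forall>b\<in>set (A # B # suf). a \<inter> b = {}))"
    by (rule pdisj_app)
  also have "pdisj (A # B # suf) = (A \<inter> B = {} \<and> (\<forall>b\<in>set suf. A \<inter> b = {} \<and> B \<inter> b = {}) \<and> pdisj suf)"
    by auto
  also have "(\<forall>a\<in>set pre. \<forall>b\<in>set (A # B # suf). a \<inter> b = {}) = (\<forall>a\<in>set pre. a \<inter> A = {} \<and> a \<inter> B = {} \<and> (\<forall>b\<in>set suf. a \<inter> b = {}))"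
    by auto
  finally show ?thesis .
qed
lemma pd_new: assumes "pdisj (pre @ X # Y # suf)" "A \<subseteq> X \<union> Y" "B \<subseteq> X \<union> Y" "A \<inter> B = {}"
  shows "pdisj (pre @ A # B # suf)"
proof -
  have o: "pdisj pre" "pdisj suf" "\<forall>a\<in>set pre. a \<inter> X = {} \<and> a \<inter> Y = {} \<and> (\<forall>b\<in>set suf. a \<inter> b = {})"
    "\<forall>b\<in>set suf. X \<inter> b = {} \<and> Y \<inter> b = {}" using assms(1) unfolding pdisj_mid by auto
  have "\<forall>a\<in>set pre. a \<inter> A = {} \<and> a \<inter> B = {} \<and> (\<forall>b\<in>set suf. a \<inter> b = {})" using o(3) assms(2,3) by (auto simp: disjoint_iff subset_iff)
  moreover have "\<forall>b\<in>set suf. A \<inter> b = {} \<and> B \<inter> b = {}" using o(4) assms(2,3) by (auto simp: disjoint_iff subset_iff)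
  ultimately show ?thesis unfolding pdisj_mid using o(1,2) assms(4) by simp
qed

lemma part_iff: "is_ordered_partition N Bs = ({} \<notin> set Bs \<and> pdisj Bs \<and> \<Union>(set Bs) = {1..N})"
  unfolding is_ordered_partition_def pdisj_iff by (auto simp: in_set_conv_nth)


definition PsiL :: "nat set list \<Rightarrow> nat set \<Rightarrow> nat set \<Rightarrow> nat set list \<Rightarrow> nat set list" where
  "PsiL pre X Y suf = (let s = sig (\<Union>(set pre)) (\<Union>(set suf)) (X \<union> Y) in pre @ s ` Y # s ` X # suf)"

lemma L_lo: "j < length pre \<Longrightarrow> (pre @ X # Y # suf) ! j = pre ! j"
  by (simp add: nth_append)
lemma L_n: "(pre @ X # Y # suf) ! length pre = X"
  by (simp add: nth_append)
lemma L_Sn: "(pre @ X # Y # suf) ! Suc (length pre) = Y"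
  by (simp add: nth_append)
lemma L_hi: "Suc (length pre) < j \<Longrightarrow> (pre @ X # Y # suf) ! j = suf ! (j - Suc (Suc (length pre)))"
  by (simp add: nth_append nth_Cons' )

lemma L_inE: "e \<in> \<Union>(set pre) \<longleftrightarrow> (\<exists>k<length pre. e \<in> (pre @ X # Y # suf) ! k)"
proof
  assume "e \<in> \<Union>(set pre)"
  then obtain i where "i<length pre" "e \<in> pre!i" by (auto simp: in_set_conv_nth)
  thus "\<exists>k<length pre. e \<in> (pre @ X # Y # suf) ! k" using L_lo by metis
next
  assume "\<exists>k<length pre. e \<in> (pre @ X # Y # suf) ! k"
  then obtain k where "k<length pre" "e \<in> (pre @ X # Y # suf) ! k" by blast
  thus "e \<in> \<Union>(set pre)" using L_lo nth_mem by (metis UnionI)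
qed

lemma L_inT: "e \<in> \<Union>(set suf) \<longleftrightarrow> (\<exists>k. Suc (length pre) < k \<and> k < length (pre @ X # Y # suf) \<and> e \<in> (pre @ X # Y # suf) ! k)"
proof
  assume "e \<in> \<Union>(set suf)"
  then obtain m where m: "m < length suf" "e \<in> suf ! m" by (auto simp: in_set_conv_nth)
  show "\<exists>k. Suc (length pre) < k \<and> k < length (pre @ X # Y # suf) \<and> e \<in> (pre @ X # Y # suf) ! k"
    apply (rule exI[of _ "m + Suc (Suc (length pre))"])
    using m by (simp add: L_hi)
next
  assume "\<exists>k. Suc (length pre) < k \<and> k < length (pre @ X # Y # suf) \<and> e \<in> (pre @ X # Y # suf) ! k"
  then obtain k where k: "Suc (length pre) < k" "k < length (pre @ X # Y # suf)" "e \<in> (pre @ X # Y # suf) ! k" by blast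
  have "e \<in> suf ! (k - Suc (Suc (length pre)))" using k L_hi by metis
  moreover have "k - Suc (Suc (length pre)) < length suf" using k by simp
  ultimately show "e \<in> \<Union>(set suf)" by (meson UnionI nth_mem)
qed

lemma Nel:
  assumes "u \<in> X \<union> Y" "e1 \<in> \<Union>(set pre)" "e1 < u" "e2 \<in> \<Union>(set suf)" "u < e2"
  shows "c3 (pre @ X # Y # suf)"
proof -
  obtain k1 where k1: "k1 < length pre" "e1 \<in> (pre @ X # Y # suf) ! k1" using assms(2) L_inE by metis
  obtain k3 where k3: "Suc (length pre) < k3" "k3 < length (pre @ X # Y # suf)" "e2 \<in> (pre @ X # Y # suf) ! k3"
    using assms(4) L_inT by metis
  obtain m where m: "m = length pre \<or> m = Suc (length pre)" "u \<in> (pre @ X # Y # suf) ! m"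
    using assms(1) L_n L_Sn by (metis Un_iff)
  show ?thesis unfolding c3_def
    apply (rule exI[of _ k1], rule exI[of _ m], rule exI[of _ k3])
    apply (rule exI[of _ e1], rule exI[of _ u], rule exI[of _ e2])
    using k1 k3 m assms by auto
qed

lemma lift:
  assumes fin: "finite (X \<union> Y)" and a: "a \<in> (pre @ sig (\<Union>(set pre)) (\<Union>(set suf)) (X \<union> Y) ` Y # sig (\<Union>(set pre)) (\<Union>(set suf)) (X \<union> Y) ` X # suf) ! j"
    and j: "j < length (pre @ X # Y # suf)"
  shows "\<exists>j'. j' < length (pre @ X # Y # suf) \<and> a \<in> (pre @ X # Y # suf) ! j' \<and> (j < length pre \<longrightarrow> j' = j)
     \<and> (Suc (length pre) < j \<longrightarrow> j' = j) \<and> (j = length pre \<or> j = Suc (length pre) \<longrightarrow> j' = length pre \<or> j' = Suc (length pre))"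
proof -
  let ?s = "sig (\<Union>(set pre)) (\<Union>(set suf)) (X \<union> Y)"
  consider "j < length pre" | "j = length pre" | "j = Suc (length pre)" | "Suc (length pre) < j" by linarith
  thus ?thesis
  proof cases
    case 1 thus ?thesis using a j by (intro exI[of _ j]) (simp add: L_lo)
  next
    case 4 thus ?thesis using a j by (intro exI[of _ j]) (simp add: L_hi)
  next
    case 2
    have "a \<in> ?s ` Y" using a 2 L_n by metis
    hence "a \<in> X \<union> Y" using sig_U[OF fin] by blast
    thus ?thesis using 2 by (auto simp: L_n L_Sn intro: exI[of _ "length pre"] exI[of _ "Suc (length pre)"])
  next
    case 3
    have "a \<in> ?s ` X" using a 3 L_Sn by metis
    hence "a \<in> X \<union> Y" using sig_U[OF fin] by blast
    thus ?thesis using 3 by (auto simp: L_n L_Sn intro: exI[of _ "length pre"] exI[of _ "Suc (length pre)"])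
  qed
qed


lemma ord_lift: fixes n j1 j2 k1 k2 :: nat
  assumes "j1 < j2" "\<not> (j1 = n \<and> j2 = Suc n)"
   "j1 < n \<longrightarrow> k1 = j1" "Suc n < j1 \<longrightarrow> k1 = j1" "j1 = n \<or> j1 = Suc n \<longrightarrow> k1 = n \<or> k1 = Suc n"
   "j2 < n \<longrightarrow> k2 = j2" "Suc n < j2 \<longrightarrow> k2 = j2" "j2 = n \<or> j2 = Suc n \<longrightarrow> k2 = n \<or> k2 = Suc n"
  shows "k1 < k2"
proof -
  consider "j1 < n" | "j1 = n" | "j1 = Suc n" | "Suc n < j1" by linarith
  then show ?thesis
  proof cases
    case 1
    then show ?thesis using assms by (cases "j2 < n"; cases "Suc n < j2"; auto)
  next
    case 2
    then show ?thesis using assms by auto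
  next
    case 3
    then show ?thesis using assms by auto
  next
    case 4
    then show ?thesis using assms by auto
  qed
qed

lemma core:
  fixes pre suf :: "nat set list" and X Y :: "nat set"
  defines "E \<equiv> \<Union>(set pre)" and "T \<equiv> \<Union>(set suf)"
  defines "s \<equiv> sig E T (X \<union> Y)"
  assumes fin: "finite (X \<union> Y)" and c: "c3 (pre @ s ` Y # s ` X # suf)"
  shows "c3 (pre @ X # Y # suf)"
proof -
  let ?L = "pre @ X # Y # suf" and ?L' = "pre @ s ` Y # s ` X # suf"
  let ?n = "length pre"
  obtain j1 j2 j3 a b c where h: "j1 < j2" "j2 < j3" "j3 < length ?L'" "a \<in> ?L'!j1" "b \<in> ?L'!j2"
    "c \<in> ?L'!j3" "a < b" "b < c" using c unfolding c3_def by blast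
  have lenL: "length ?L' = length ?L" by simp
  have sameclass: "x < y" if xy: "x \<in> X \<union> Y" "y \<in> X \<union> Y" "s y < s x"
     "(\<exists>e\<in>E. e < s y) = (\<exists>e\<in>E. e < s x)" "(\<exists>e\<in>T. s y < e) = (\<exists>e\<in>T. s x < e)" for x y
  proof (rule ccontr)
    assume "\<not> x < y"
    hence "y < x \<or> y = x" by auto
    moreover have "(\<exists>e\<in>E. e < x) = (\<exists>e\<in>E. e < y)" using xy sig_A[OF fin, of x E T] sig_A[OF fin, of y E T]
      unfolding s_def by simp
    moreover have "(\<exists>e\<in>T. x < e) = (\<exists>e\<in>T. y < e)" using xy sig_C[OF fin, of x T E] sig_C[OF fin, of y T E]
      unfolding s_def by simp
    ultimately show False using sig_rev[OF fin xy(2) xy(1), of E T] xy(3) unfolding s_def by auto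
  qed
  consider "j1 = ?n \<and> j2 = Suc ?n" | "j2 = ?n \<and> j3 = Suc ?n" | "\<not> (j1 = ?n \<and> j2 = Suc ?n) \<and> \<not> (j2 = ?n \<and> j3 = Suc ?n)"
    by blast
  thus ?thesis
  proof cases
    case 1
    have "a \<in> s ` Y" using h(4) 1 L_n by metis
    then obtain y where y: "y \<in> Y" "a = s y" by blast
    have "b \<in> s ` X" using h(5) 1 L_Sn by metis
    then obtain x where x: "x \<in> X" "b = s x" by blast
    have cT: "c \<in> T" unfolding T_def using L_inT[of c suf pre "s ` Y" "s ` X"] h 1 by auto
    have Cb: "\<exists>e\<in>T. b < e" using cT h by auto
    have Ca: "\<exists>e\<in>T. a < e" using cT h(7,8) less_trans by blast
    show ?thesis
    proof (cases "(\<exists>e\<in>E. e < a) = (\<exists>e\<in>E. e < b)")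
      case True
      have xy: "x < y" using sameclass[of x y] x y True Ca Cb h(7) by auto
      have "\<exists>e\<in>T. y < e" using Ca y sig_C[OF fin, of y T E] unfolding s_def by auto
      then obtain e where e: "e \<in> T" "y < e" by blast
      obtain k where k: "Suc ?n < k" "k < length ?L" "e \<in> ?L ! k" using e(1) L_inT unfolding T_def by metis
      show ?thesis unfolding c3_def
        apply (rule exI[of _ ?n], rule exI[of _ "Suc ?n"], rule exI[of _ k])
        apply (rule exI[of _ x], rule exI[of _ y], rule exI[of _ e])
        using k xy e x y by (simp add: L_n L_Sn)
    next
      case False
      hence "\<exists>e\<in>E. e < b" using h(7) by auto
      then obtain e1 where "e1 \<in> E" "e1 < b" by blast
      moreover have "b \<in> X \<union> Y" using x sig_U[OF fin] unfolding s_def by auto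
      ultimately show ?thesis using Nel[of b X Y e1 pre c suf] cT h(8) unfolding E_def T_def by blast
    qed
  next
    case 2
    have "b \<in> s ` Y" using h(5) 2 L_n by metis
    then obtain y where y: "y \<in> Y" "b = s y" by blast
    have "c \<in> s ` X" using h(6) 2 L_Sn by metis
    then obtain x where x: "x \<in> X" "c = s x" by blast
    have j1: "j1 < ?n" using h 2 by auto
    have aE: "a \<in> E" unfolding E_def using L_inE[of a pre "s ` Y" "s ` X" suf] h(4) j1 by auto
    have Ab: "\<exists>e\<in>E. e < b" using aE h by auto
    have Ac: "\<exists>e\<in>E. e < c" using aE h(7,8) less_trans by blast
    show ?thesis
    proof (cases "(\<exists>e\<in>T. b < e) = (\<exists>e\<in>T. c < e)")
      case True
      have xy: "x < y" using sameclass[of x y] x y True Ab Ac h(8) by auto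
      have "\<exists>e\<in>E. e < x" using Ac x sig_A[OF fin, of x E T] unfolding s_def by auto
      then obtain e where e: "e \<in> E" "e < x" by blast
      obtain k where k: "k < ?n" "e \<in> ?L ! k" using e(1) L_inE unfolding E_def by metis
      show ?thesis unfolding c3_def
        apply (rule exI[of _ k], rule exI[of _ ?n], rule exI[of _ "Suc ?n"])
        apply (rule exI[of _ e], rule exI[of _ x], rule exI[of _ y])
        using k xy e x y by (simp add: L_n L_Sn)
    next
      case False
      have "\<exists>e\<in>T. b < e"
      proof (rule ccontr)
        assume nb: "\<not> (\<exists>e\<in>T. b < e)"
        hence "\<not> (\<exists>e\<in>T. c < e)" using h(8) by (meson less_trans)
        with nb False show False by simp
      qed
      then obtain e2 where "e2 \<in> T" "b < e2" by blast
      moreover have "b \<in> X \<union> Y" using y sig_U[OF fin] unfolding s_def by auto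
      ultimately show ?thesis using Nel[of b X Y a pre e2 suf] aE h(7) unfolding E_def T_def by blast
    qed
  next
    case 3
    have j3: "j3 < length ?L" using h(3) by simp
    obtain k1 where k1: "k1 < length ?L" "a \<in> ?L ! k1" "j1 < ?n \<longrightarrow> k1 = j1" "Suc ?n < j1 \<longrightarrow> k1 = j1"
       "j1 = ?n \<or> j1 = Suc ?n \<longrightarrow> k1 = ?n \<or> k1 = Suc ?n"
      using lift[OF fin, of a pre suf j1] h j3 unfolding s_def E_def T_def by auto
    obtain k2 where k2: "k2 < length ?L" "b \<in> ?L ! k2" "j2 < ?n \<longrightarrow> k2 = j2" "Suc ?n < j2 \<longrightarrow> k2 = j2"
       "j2 = ?n \<or> j2 = Suc ?n \<longrightarrow> k2 = ?n \<or> k2 = Suc ?n"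
      using lift[OF fin, of b pre suf j2] h j3 unfolding s_def E_def T_def by auto
    obtain k3 where k3: "k3 < length ?L" "c \<in> ?L ! k3" "j3 < ?n \<longrightarrow> k3 = j3" "Suc ?n < j3 \<longrightarrow> k3 = j3"
       "j3 = ?n \<or> j3 = Suc ?n \<longrightarrow> k3 = ?n \<or> k3 = Suc ?n"
      using lift[OF fin, of c pre suf j3] h j3 unfolding s_def E_def T_def by auto
    have "k1 < k2" using ord_lift[OF h(1) _ k1(3-5) k2(3-5)] 3 by blast
    have "k2 < k3" using ord_lift[OF h(2) _ k2(3-5) k3(3-5)] 3 by blast
    have "k1 < k2 \<and> k2 < k3 \<and> k3 < length ?L \<and> a \<in> ?L!k1 \<and> b \<in> ?L!k2 \<and> c \<in> ?L!k3 \<and> a < b \<and> b < c"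
      using \<open>k1 < k2\<close> \<open>k2 < k3\<close> k1(2) k2(2) k3(1,2) h(7,8) by blast
    thus ?thesis unfolding c3_def by blast
  qed
qed


definition Psi :: "nat \<Rightarrow> nat set list \<Rightarrow> nat set list" where
  "Psi n Bs = PsiL (take n Bs) (Bs ! n) (Bs ! Suc n) (drop (Suc (Suc n)) Bs)"

lemma Psi_app: "length pre = n \<Longrightarrow> Psi n (pre @ X # Y # suf) = PsiL pre X Y suf"
  by (simp add: Psi_def nth_append)

lemma PsiL_invol: assumes fin: "finite (X \<union> Y)" and n: "length pre = n"
  shows "Psi n (PsiL pre X Y suf) = pre @ X # Y # suf"
proof -
  define s where "s = sig (\<Union>(set pre)) (\<Union>(set suf)) (X \<union> Y)"
  have "s ` Y \<union> s ` X = X \<union> Y" using sig_image[OF fin] unfolding s_def by (metis image_Un sup_commute)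
  hence "Psi n (PsiL pre X Y suf) = pre @ s ` (s ` X) # s ` (s ` Y) # suf"
    using n unfolding PsiL_def Let_def s_def[symmetric] by (simp add: Psi_app PsiL_def s_def Let_def)
  also have "\<dots> = pre @ X # Y # suf" using sig_image2[OF fin] unfolding s_def by auto
  finally show ?thesis .
qed

definition Sset :: "nat list \<Rightarrow> nat set list set" where
  "Sset bl = {Bs. is_ordered_partition (sum_list bl) Bs \<and> map card Bs = bl \<and> \<not> op_contains Bs [1,2,3]}"

lemma maps:
  assumes B: "Bs \<in> Sset (pb @ p # q # sb)"
  shows "Psi (length pb) Bs \<in> Sset (pb @ q # p # sb) \<and> Psi (length pb) (Psi (length pb) Bs) = Bs"
proof -
  have mc: "map card Bs = pb @ p # q # sb" using B unfolding Sset_def by auto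
  then obtain pre X Y suf where d: "Bs = pre @ X # Y # suf" "map card pre = pb" "card X = p" "card Y = q"
    "map card suf = sb" by (auto simp: map_eq_append_conv map_eq_Cons_conv)
  have n: "length pre = length pb" using d(2) by auto
  let ?N = "sum_list (pb @ p # q # sb)"
  have P: "{} \<notin> set Bs" "pdisj Bs" "\<Union>(set Bs) = {1..?N}" using B unfolding Sset_def part_iff by auto
  have fin: "finite (X \<union> Y)"
  proof -
    have "X \<union> Y \<subseteq> \<Union>(set Bs)" using d(1) by auto
    thus ?thesis using P(3) finite_subset by auto
  qed
  define s where "s = sig (\<Union>(set pre)) (\<Union>(set suf)) (X \<union> Y)"
  have inj: "inj_on s (X \<union> Y)" unfolding s_def by (rule sig_inj[OF fin])
  have im: "s ` (X \<union> Y) = X \<union> Y" unfolding s_def by (rule sig_image[OF fin])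
  have sY: "s ` Y \<subseteq> X \<union> Y" and sX: "s ` X \<subseteq> X \<union> Y" using im by auto
  have XY: "X \<inter> Y = {}" using P(2) unfolding d(1) pdisj_mid by simp
  have sXY: "s ` Y \<inter> s ` X = {}"
  proof -
    have "s ` Y \<inter> s ` X = s ` (Y \<inter> X)" using inj by (auto simp: inj_on_def)
    thus ?thesis using XY by auto
  qed
  have cY: "card (s ` Y) = card Y" using inj by (meson card_image inj_on_subset sup_ge2)
  have cX: "card (s ` X) = card X" using inj by (meson card_image inj_on_subset sup_ge1)
  have psi: "Psi (length pb) Bs = pre @ s ` Y # s ` X # suf"
  proof -
    have "Psi (length pb) Bs = PsiL pre X Y suf" using Psi_app[of pre "length pb" X Y suf, OF n] d(1) by simp
    thus ?thesis unfolding PsiL_def Let_def s_def .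
  qed
  have ne: "{} \<notin> set (pre @ s ` Y # s ` X # suf)"
  proof -
    have "Y \<noteq> {}" "X \<noteq> {}" using P(1) d(1) by auto
    hence "s ` Y \<noteq> {}" "s ` X \<noteq> {}" by auto
    thus ?thesis using P(1) d(1) by simp
  qed
  have pd: "pdisj (pre @ s ` Y # s ` X # suf)"
    by (rule pd_new[of pre X Y suf]) (use P(2) d(1) sY sX sXY in auto)
  have YX: "s ` Y \<union> s ` X = X \<union> Y" using im by (metis image_Un sup_commute)
  have un: "\<Union>(set (pre @ s ` Y # s ` X # suf)) = {1..sum_list (pb @ q # p # sb)}"
  proof -
    have "\<Union>(set (pre @ s ` Y # s ` X # suf)) = \<Union>(set pre) \<union> (s ` Y \<union> s ` X) \<union> \<Union>(set suf)" by auto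
    also have "\<dots> = \<Union>(set pre) \<union> (X \<union> Y) \<union> \<Union>(set suf)" using YX by simp
    also have "\<dots> = \<Union>(set Bs)" using d(1) by auto
    finally show ?thesis using P(3) by simp
  qed
  have mc2: "map card (pre @ s ` Y # s ` X # suf) = pb @ q # p # sb" using d cY cX by simp
  have nc: "\<not> c3 (pre @ X # Y # suf)" using B d(1) c3_iff unfolding Sset_def by auto
  have nc2: "\<not> c3 (pre @ s ` Y # s ` X # suf)" using core[OF fin] nc unfolding s_def by blast
  have inv: "Psi (length pb) (Psi (length pb) Bs) = Bs"
    using PsiL_invol[OF fin n, of suf] Psi_app[of pre "length pb" X Y suf, OF n] d(1) by simp
  show ?thesis using psi ne pd un mc2 nc2 inv unfolding Sset_def part_iff c3_iff[symmetric] by auto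
qed

lemma swap_eq: "op_count (pb @ p # q # sb) [1,2,3] = op_count (pb @ q # p # sb) [1,2,3]"
proof -
  have "bij_betw (Psi (length pb)) (Sset (pb @ p # q # sb)) (Sset (pb @ q # p # sb))"
    by (rule bij_betw_byWitness[where f' = "Psi (length pb)"]) (auto dest: maps[of _ pb p q sb] maps[of _ pb q p sb])
  hence "card (Sset (pb @ p # q # sb)) = card (Sset (pb @ q # p # sb))" by (rule bij_betw_same_card)
  thus ?thesis unfolding op_count_def Sset_def by simp
qed

lemma perm_gen:
  fixes f :: "nat list \<Rightarrow> nat"
  assumes H: "\<And>pre a b suf. f (pre @ a # b # suf) = f (pre @ b # a # suf)"
  shows "mset l1 = mset l2 \<Longrightarrow> f (pre @ l1) = f (pre @ l2)"
proof (induction l1 arbitrary: pre l2)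
  case Nil
  then show ?case by simp
next
  case (Cons x xs)
  have mv: "f (pre @ ys @ x # zs) = f (pre @ x # ys @ zs)" for pre ys zs
  proof (induction ys arbitrary: pre)
    case Nil
    then show ?case by simp
  next
    case (Cons y ys)
    have "f (pre @ (y # ys) @ x # zs) = f ((pre @ [y]) @ ys @ x # zs)" by simp
    also have "\<dots> = f ((pre @ [y]) @ x # ys @ zs)" by (rule Cons.IH)
    also have "\<dots> = f (pre @ y # x # ys @ zs)" by simp
    also have "\<dots> = f (pre @ x # y # ys @ zs)" by (rule H)
    finally show ?case by simp
  qed
  have "x \<in> set l2" using Cons.prems by (metis list.set_intros(1) set_mset_mset)
  then obtain ys zs where l2: "l2 = ys @ x # zs" by (meson split_list)
  have m: "mset xs = mset (ys @ zs)" using Cons.prems l2 by simp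
  have "f (pre @ x # xs) = f ((pre @ [x]) @ xs)" by simp
  also have "\<dots> = f ((pre @ [x]) @ ys @ zs)" by (rule Cons.IH[OF m])
  also have "\<dots> = f (pre @ ys @ x # zs)" using mv by simp
  finally show ?case using l2 by simp
qed

theorem lemma1:
  fixes bl cl :: "nat list"
  assumes "\<forall>b \<in> set bl. b > 0"
    and "mset cl = mset bl"
  shows "op_count bl [1, 2, 3] = op_count cl [1, 2, 3]"
  using perm_gen[of "\<lambda>l. op_count l [1,2,3]" bl cl "[]"] swap_eq assms(2) by simp

end
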